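(* Let $\tau>0$, let $u_\tau:\mathbb{R}^d\to\mathbb{R}$ be a ($\mathbb{Z}^d$-periodic, continuous) solution of the discrete Lax--Oleinik equation \[ u_\tau(y)+\bar L(\tau)\,\tau=\inf_{x\in\mathbb{R}^d}\bigl(u_\tau(x)+\mathcal L_\tau(x,y)\bigr)\qquad\forall y, \] and let $\{x_n\}_{n\le 0}$ be a calibrated backward configuration for $u_\tau$. Define the discrete velocities $v_n:=\frac{x_{n+1}-x_n}{\tau}$. Then there exists a constant $D>0$, depending only on the Lagrangian $L$, such that $|v_n|\le D$ for all $n\le -1$.
   Context: $\mathbb{T}^d=\mathbb{R}^d/\mathbb{Z}^d$; functions on $\mathbb{T}^d$ are identified with $\mathbb{Z}^d$-periodic functions on $\mathbb{R}^d$. $H:\mathbb{T}^d\times\mathbb{R}^d\to\mathbb{R}$ is a Tonelli Hamiltonian: $H\in C^2$, $D^2_{pp}H(x,p)$ is positive definite for all $(x,p)$, and for every $K>0$ there is $C(K)\in\mathbb{R}$ with $H(x,p)\ge K|p|+C(K)$. $L(x,v)=\sup_{p}\{p\cdot v-H(x,p)\}$ is its Legendre transform (so $L$ is $C^2$, strictly convex in $v$, and superlinear: for every $K>0$ there is $C(K)$ with $L(x,v)\ge K|v|+C(K)$). For $\tau>0$ set $\mathcal L_\tau(x,y):=\tau L\bigl(x,\frac{y-x}{\tau}\bigr)$. It is known that for each $\tau>0$ there is a unique constant $\bar L(\tau)\in\mathbb{R}$ for which the discrete Lax--Oleinik equation above has a continuous periodic solution $u_\tau$, that such solutions are Lipschitz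 with a constant independent of $\tau$, and that $\bar L(\tau)\to-\alpha(H)$ as $\tau\to0$, where $\alpha(H)$ is the unique constant such that $H(x,Du)=\alpha(H)$ has a viscosity solution on $\mathbb{T}^d$. A calibrated (backward) configuration for $u_\tau$ (through $x$) is a sequence $\{x_{-k}\}_{k\ge0}$ with $x_0=x$ and $u_\tau(x_{-k})+\tau\bar L(\tau)=u_\tau(x_{-k-1})+\mathcal L_\tau(x_{-k-1},x_{-k})$ for all $k\ge0$. *)

theory Defs
  imports "HOL-Analysis.Analysis"
begin

definition int_vec :: "real^'d \<Rightarrow> bool" where
  "int_vec k \<longleftrightarrow> (\<forall>i. k $ i \<in> \<int>)"

definition Zd_periodic :: "(real^'d \<Rightarrow> 'b) \<Rightarrow> bool" where
  "Zd_periodic f \<longleftrightarrow> (\<forall>x k. int_vec k \<longrightarrow> f (x + k) = f x)"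

definition C2 :: "('a::real_normed_vector \<Rightarrow> real) \<Rightarrow> ('a \<Rightarrow> 'a \<Rightarrow>\<^sub>L real) \<Rightarrow> ('a \<Rightarrow> 'a \<Rightarrow>\<^sub>L 'a \<Rightarrow>\<^sub>L real) \<Rightarrow> bool" where
  "C2 f f' f'' \<longleftrightarrow> (\<forall>z. (f has_derivative blinfun_apply (f' z)) (at z))
                  \<and> (\<forall>z. (f' has_derivative blinfun_apply (f'' z)) (at z))
                  \<and> continuous_on UNIV f''"

text \<open>Tonelli Hamiltonian H(x,p) on T^d x R^d (as a Z^d-periodic function in x).\<close>
definition tonelli :: "(real^'d \<Rightarrow> real^'d \<Rightarrow> real) \<Rightarrow> bool" where
  "tonelli H \<longleftrightarrow>
     (\<forall>p. Zd_periodic (\<lambda>x. H x p))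
   \<and> (\<exists>f' f''. C2 (\<lambda>z. H (fst z) (snd z)) f' f''
        \<and> (\<forall>z w. w \<noteq> 0 \<longrightarrow> blinfun_apply (blinfun_apply (f'' z) (0, w)) (0, w) > 0))
   \<and> (\<forall>K>0. \<exists>C. \<forall>x p. H x p \<ge> K * norm p + C)"

definition lagrangian :: "(real^'d \<Rightarrow> real^'d \<Rightarrow> real) \<Rightarrow> real^'d \<Rightarrow> real^'d \<Rightarrow> real" where
  "lagrangian H x v = (SUP p. p \<bullet> v - H x p)"

definition action :: "(real^'d \<Rightarrow> real^'d \<Rightarrow> real) \<Rightarrow> real \<Rightarrow> real^'d \<Rightarrow> real^'d \<Rightarrow> real" where
  "action H \<tau> x y = \<tau> * lagrangian H x ((1 / \<tau>) *\<^sub>R (y - x))"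

text \<open>u solves the discrete Lax-Oleinik equation with constant c (= Lbar(tau)).\<close>
definition discrete_LO_solution :: "(real^'d \<Rightarrow> real^'d \<Rightarrow> real) \<Rightarrow> real \<Rightarrow> real \<Rightarrow> (real^'d \<Rightarrow> real) \<Rightarrow> bool" where
  "discrete_LO_solution H \<tau> c u \<longleftrightarrow>
     continuous_on UNIV u \<and> Zd_periodic u \<and>
     (\<forall>y. u y + c * \<tau> = (INF x. u x + action H \<tau> x y))"

text \<open>Calibrated backward configuration: xs k stands for x_{-k}.\<close>
definition calibrated :: "(real^'d \<Rightarrow> real^'d \<Rightarrow> real) \<Rightarrow> real \<Rightarrow> real \<Rightarrow> (real^'d \<Rightarrow> real) \<Rightarrow> (nat \<Rightarrow> real^'d) \<Rightarrow> bool" where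
  "calibrated H \<tau> c u xs \<longleftrightarrow>
     (\<forall>k. u (xs k) + \<tau> * c = u (xs (Suc k)) + action H \<tau> (xs (Suc k)) (xs k))"

end

theory Submission
  imports Defs
begin

lemma frac_vec:
  fixes x :: "real^'d"
  shows "\<exists>k. int_vec k \<and> x + k \<in> cbox 0 (\<chi> i. 1)"
proof -
  define k :: "real^'d" where "k = (\<chi> i. - of_int (floor (x $ i)))"
  have "int_vec k" unfolding int_vec_def k_def by simp
  moreover have "x + k \<in> cbox 0 (\<chi> i. 1)"
    unfolding mem_box_cart k_def
    by (auto simp: of_int_floor_le) (smt (verit) real_of_int_floor_add_one_ge)
  ultimately show ?thesis by blast
qed

lemma periodic_bounded:
  fixes u :: "real^'d \<Rightarrow> real"
  assumes "continuous_on UNIV u" "Zd_periodic u"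
  shows "\<exists>B. \<forall>x. \<bar>u x\<bar> \<le> B"
proof -
  have "compact (u ` cbox 0 (\<chi> i. 1))"
    by (rule compact_continuous_image) (auto intro: continuous_on_subset[OF assms(1)])
  then obtain B where B: "\<forall>y\<in>u ` cbox 0 (\<chi> i. 1). norm y \<le> B"
    using compact_imp_bounded bounded_iff by metis
  show ?thesis
  proof (intro exI allI)
    fix x
    obtain k :: "real^'d" where k: "int_vec k" "x + k \<in> cbox 0 (\<chi> i. 1)" using frac_vec by blast
    have "u (x + k) = u x" using assms(2) k(1) unfolding Zd_periodic_def by blast
    then show "\<bar>u x\<bar> \<le> B" using B k(2) by force
  qed
qed

lemma H_bounded:
  fixes H :: "real^'d \<Rightarrow> real^'d \<Rightarrow> real"
  assumes "tonelli H"
  shows "\<exists>M. \<forall>x p. norm p \<le> K \<longrightarrow> \<bar>H x p\<bar> \<le> M"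
proof -
  from assms obtain f' f'' where C: "C2 (\<lambda>z. H (fst z) (snd z)) f' f''"
    unfolding tonelli_def by blast
  have per: "\<And>p. Zd_periodic (\<lambda>x. H x p)" using assms unfolding tonelli_def by blast
  have "continuous_on UNIV (\<lambda>z. H (fst z) (snd z))"
    using C unfolding C2_def
    by (meson continuous_at_imp_continuous_on has_derivative_continuous)
  then have "compact ((\<lambda>z. H (fst z) (snd z)) ` (cbox 0 (\<chi> i. 1) \<times> cball 0 K))"
    by (intro compact_continuous_image compact_Times compact_cbox compact_cball)
       (auto intro: continuous_on_subset)
  then obtain M where M: "\<forall>y\<in>(\<lambda>z. H (fst z) (snd z)) ` (cbox 0 (\<chi> i. 1) \<times> cball 0 K). norm y \<le> M"
    using compact_imp_bounded bounded_iff by metis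
  show ?thesis
  proof (intro exI allI impI)
    fix x p :: "real^'d" assume p: "norm p \<le> K"
    obtain k :: "real^'d" where k: "int_vec k" "x + k \<in> cbox 0 (\<chi> i. 1)" using frac_vec by blast
    have "H (x + k) p = H x p" using per[of p] k(1) unfolding Zd_periodic_def by blast
    moreover have "(x + k, p) \<in> cbox 0 (\<chi> i. 1) \<times> cball 0 K" using k(2) p by auto
    ultimately show "\<bar>H x p\<bar> \<le> M" using M by force
  qed
qed


lemma L_bdd:
  fixes H :: "real^'d \<Rightarrow> real^'d \<Rightarrow> real"
  assumes "tonelli H"
  shows "bdd_above (range (\<lambda>p. p \<bullet> v - H x p))"
proof -
  have "\<forall>K>0. \<exists>C. \<forall>x p. H x p \<ge> K * norm p + C" using assms unfolding tonelli_def by blast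
  then obtain C where C: "\<forall>x p. H x p \<ge> (norm v + 1) * norm p + C"
    by (metis add_nonneg_pos norm_ge_zero zero_less_one)
  show ?thesis
  proof (rule bdd_aboveI2[of _ _ "-C"])
    fix p
    have "p \<bullet> v \<le> norm p * norm v" by (rule norm_cauchy_schwarz)
    moreover have "H x p \<ge> (norm v + 1) * norm p + C" using C by blast
    moreover have "(norm v + 1) * norm p = norm p * norm v + norm p" by (simp add: algebra_simps)
    ultimately show "p \<bullet> v - H x p \<le> - C"
      using norm_ge_zero[of p] by linarith
  qed
qed

lemma L_ge:
  fixes H :: "real^'d \<Rightarrow> real^'d \<Rightarrow> real"
  assumes "tonelli H"
  shows "p \<bullet> v - H x p \<le> lagrangian H x v"
  unfolding lagrangian_def by (rule cSUP_upper[OF UNIV_I L_bdd[OF assms]])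

lemma L_le1:
  fixes H :: "real^'d \<Rightarrow> real^'d \<Rightarrow> real"
  assumes "tonelli H"
  shows "\<exists>A. \<forall>x v. norm v \<le> 1 \<longrightarrow> lagrangian H x v \<le> A"
proof -
  have "\<forall>K>0. \<exists>C. \<forall>x p. H x p \<ge> K * norm p + C" using assms unfolding tonelli_def by blast
  then obtain C where C: "\<forall>x p. H x p \<ge> 2 * norm p + C" by force
  show ?thesis
  proof (intro exI allI impI)
    fix x v :: "real^'d" assume v: "norm v \<le> 1"
    show "lagrangian H x v \<le> - C"
      unfolding lagrangian_def
    proof (rule cSUP_least)
      fix p
      have "p \<bullet> v \<le> norm p * norm v" by (rule norm_cauchy_schwarz)
      also have "\<dots> \<le> norm p" using v by (simp add: mult_left_le)
      moreover have "H x p \<ge> 2 * norm p + C" using C by blast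
      ultimately show "p \<bullet> v - H x p \<le> - C" using norm_ge_zero[of p] by linarith
    qed simp
  qed
qed

lemma L_superlin:
  fixes H :: "real^'d \<Rightarrow> real^'d \<Rightarrow> real"
  assumes "tonelli H" "K > 0"
  shows "\<exists>M. \<forall>x v. K * norm v - M \<le> lagrangian H x v"
proof -
  obtain M where M: "\<forall>x p. norm p \<le> K \<longrightarrow> \<bar>H x p\<bar> \<le> M" using H_bounded[OF assms(1)] by blast
  show ?thesis
  proof (intro exI allI)
    fix x v :: "real^'d"
    define p where "p = (K / norm v) *\<^sub>R v"
    have np: "norm p \<le> K" unfolding p_def using assms(2) by auto
    have pv: "p \<bullet> v = K * norm v"
      unfolding p_def by (cases "v = 0") (auto simp: power2_norm_eq_inner[symmetric] power2_eq_square)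
    have "p \<bullet> v - H x p \<le> lagrangian H x v" by (rule L_ge[OF assms(1)])
    moreover have "\<bar>H x p\<bar> \<le> M" using M np by blast
    ultimately show "K * norm v - M \<le> lagrangian H x v" using pv by linarith
  qed
qed

lemma L_lower:
  fixes H :: "real^'d \<Rightarrow> real^'d \<Rightarrow> real"
  assumes "tonelli H"
  shows "\<exists>m. \<forall>x v. - m \<le> lagrangian H x v"
proof -
  obtain M where M: "\<forall>x p. norm p \<le> 0 \<longrightarrow> \<bar>H x p\<bar> \<le> M" using H_bounded[OF assms(1)] by blast
  show ?thesis
  proof (intro exI allI)
    fix x v :: "real^'d"
    have "0 \<bullet> v - H x 0 \<le> lagrangian H x v" by (rule L_ge[OF assms(1)])
    then show "- M \<le> lagrangian H x v" using M[rule_format, of 0 x] by simp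
  qed
qed

theorem lemma3p4:
  fixes H :: "real^'d \<Rightarrow> real^'d \<Rightarrow> real"
  assumes "tonelli H"
  shows "\<exists>D>0. \<forall>\<tau> c u xs. \<tau> > 0 \<and> discrete_LO_solution H \<tau> c u \<and> calibrated H \<tau> c u xs
            \<longrightarrow> (\<forall>k. norm ((1 / \<tau>) *\<^sub>R (xs k - xs (Suc k))) \<le> D)"
proof -
  let ?L = "lagrangian H"
  obtain A where A: "\<And>x v. norm v \<le> 1 \<Longrightarrow> ?L x v \<le> A" using L_le1[OF assms] by blast
  obtain M0 where M0: "\<And>x v. - M0 \<le> ?L x v" using L_lower[OF assms] by blast
  define K where "K = \<bar>A\<bar> + \<bar>M0\<bar> + 1"
  have Kpos: "K > 0" unfolding K_def by simp
  obtain MK where MK: "\<And>x v. K * norm v - MK \<le> ?L x v" using L_superlin[OF assms Kpos] by blast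
  define D where "D = \<bar>A\<bar> + \<bar>MK\<bar> + 1"
  have "\<forall>\<tau> c u xs. \<tau> > 0 \<and> discrete_LO_solution H \<tau> c u \<and> calibrated H \<tau> c u xs
            \<longrightarrow> (\<forall>k. norm ((1 / \<tau>) *\<^sub>R (xs k - xs (Suc k))) \<le> D)"
  proof (rule allI, rule allI, rule allI, rule allI, rule impI)
    fix \<tau> c u xs
    assume H: "\<tau> > 0 \<and> discrete_LO_solution H \<tau> c u \<and> calibrated H \<tau> c u xs"
    then have tau: "\<tau> > 0" and cont: "continuous_on UNIV u" and per: "Zd_periodic u"
      and eq: "\<And>y. u y + c * \<tau> = (INF x. u x + action H \<tau> x y)"
      and cal: "\<And>k. u (xs k) + \<tau> * c = u (xs (Suc k)) + \<tau> * ?L (xs (Suc k)) ((1 / \<tau>) *\<^sub>R (xs k - xs (Suc k)))"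
      unfolding discrete_LO_solution_def calibrated_def action_def by auto
    obtain B where B: "\<And>x. \<bar>u x\<bar> \<le> B" using periodic_bounded[OF cont per] by blast
    have LO: "u y + c * \<tau> \<le> u x + \<tau> * ?L x ((1 / \<tau>) *\<^sub>R (y - x))" for x y
    proof -
      have "bdd_below (range (\<lambda>x. u x + action H \<tau> x y))"
      proof (rule bdd_belowI2[of _ "-B + \<tau> * (- M0)"])
        fix x
        have "\<tau> * (- M0) \<le> \<tau> * ?L x ((1 / \<tau>) *\<^sub>R (y - x))"
          using mult_left_mono[OF M0 less_imp_le[OF tau]] by simp
        then show "-B + \<tau> * (- M0) \<le> u x + action H \<tau> x y"
          unfolding action_def using B[of x] by linarith
      qed
      then have "(INF x. u x + action H \<tau> x y) \<le> u x + action H \<tau> x y"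
        by (rule cINF_lower[OF _ UNIV_I])
      then show ?thesis using eq[of y] unfolding action_def by simp
    qed
    have cA: "c \<le> A"
    proof -
      have "u 0 + c * \<tau> \<le> u 0 + \<tau> * ?L 0 ((1 / \<tau>) *\<^sub>R (0 - 0))" by (rule LO)
      moreover have "?L 0 ((1 / \<tau>) *\<^sub>R (0 - 0)) \<le> A" by (rule A) simp
      moreover have "\<tau> * ?L 0 ((1 / \<tau>) *\<^sub>R (0 - 0)) \<le> \<tau> * A"
        using calculation(2) tau by (intro mult_left_mono) auto
      ultimately have "c * \<tau> \<le> A * \<tau>" by (simp add: mult.commute)
      then show ?thesis using tau by simp
    qed
    have cM: "- M0 \<le> c"
    proof (rule ccontr)
      assume "\<not> - M0 \<le> c"
      define \<delta> where "\<delta> = \<tau> * (- M0 - c)"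
      have dpos: "\<delta> > 0" unfolding \<delta>_def using tau \<open>\<not> - M0 \<le> c\<close> by simp
      have step: "u (xs k) - u (xs (Suc k)) \<ge> \<delta>" for k
      proof -
        have "\<tau> * (- M0) \<le> \<tau> * ?L (xs (Suc k)) ((1 / \<tau>) *\<^sub>R (xs k - xs (Suc k)))"
          using mult_left_mono[OF M0 less_imp_le[OF tau]] by simp
        then show ?thesis using cal[of k] unfolding \<delta>_def by (simp add: algebra_simps)
      qed
      have tel: "u (xs 0) - u (xs N) \<ge> real N * \<delta>" for N
      proof (induction N)
        case (Suc N)
        then show ?case using step[of N] by (simp add: algebra_simps)
      qed simp
      obtain N where N: "2 * B / \<delta> < real N" using reals_Archimedean2 by blast
      have "2 * B < real N * \<delta>" using N dpos by (simp add: field_simps)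
      moreover have "u (xs 0) - u (xs N) \<le> 2 * B" using B[of "xs 0"] B[of "xs N"] by linarith
      ultimately show False using tel[of N] by linarith
    qed
    have chain: "\<And>y'. norm (y' - y) \<le> real N * \<tau> \<Longrightarrow> u y' - u y \<le> real N * \<tau> * (A - c)" for N y
    proof (induction N)
      case 0
      then show ?case by simp
    next
      case (Suc N)
      define m where "m = y + (real N / (real N + 1)) *\<^sub>R (y' - y)"
      have m1: "m - y = (real N / (real N + 1)) *\<^sub>R (y' - y)" unfolding m_def by simp
      have m2a: "y' - m = (y' - y) - (real N / (real N + 1)) *\<^sub>R (y' - y)" unfolding m_def
        by (simp add: algebra_simps)
      have m2b: "(y' - y) - (real N / (real N + 1)) *\<^sub>R (y' - y) = (1 - real N / (real N + 1)) *\<^sub>R (y' - y)"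
        by (simp only: scaleR_diff_left scaleR_one)
      have m2c: "1 - real N / (real N + 1) = 1 / (real N + 1)"
        by (simp add: field_simps)
      have m2: "y' - m = (1 / (real N + 1)) *\<^sub>R (y' - y)" using m2a m2b m2c by simp
      have "norm (m - y) = real N / (real N + 1) * norm (y' - y)" unfolding m1 by simp
      also have "\<dots> \<le> real N / (real N + 1) * ((real N + 1) * \<tau>)"
        using Suc.prems by (intro mult_left_mono) (auto simp: add.commute)
      also have "\<dots> = real N * \<tau>" by simp
      finally have IH: "u m - u y \<le> real N * \<tau> * (A - c)" by (rule Suc.IH)
      have "norm ((1 / \<tau>) *\<^sub>R (y' - m)) = norm (y' - y) / ((real N + 1) * \<tau>)"
        unfolding m2 using tau by simp
      also have "\<dots> \<le> 1"
      proof -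
        have "norm (y' - y) \<le> (real N + 1) * \<tau>" using Suc.prems by (simp add: add.commute)
        moreover have "(real N + 1) * \<tau> > 0" using tau by simp
        ultimately show ?thesis by (simp add: pos_divide_le_eq)
      qed
      finally have "?L m ((1 / \<tau>) *\<^sub>R (y' - m)) \<le> A" by (rule A)
      then have "\<tau> * ?L m ((1 / \<tau>) *\<^sub>R (y' - m)) \<le> \<tau> * A"
        using tau by (intro mult_left_mono) auto
      then have "u y' + c * \<tau> \<le> u m + \<tau> * A"
        using LO[of y' m] by linarith
      then show ?case using IH by (simp add: algebra_simps)
    qed
    show "\<forall>k. norm ((1 / \<tau>) *\<^sub>R (xs k - xs (Suc k))) \<le> D"
    proof
      fix k
      define v where "v = (1 / \<tau>) *\<^sub>R (xs k - xs (Suc k))"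
      define N where "N = nat \<lceil>norm v\<rceil>"
      have N0: "real N = of_int \<lceil>norm v\<rceil>" unfolding N_def by simp
      have N1: "norm v \<le> real N" unfolding N0 by (rule le_of_int_ceiling)
      have N2: "real N \<le> norm v + 1" unfolding N0 by (rule of_int_ceiling_le_add_one)
      have "norm (xs k - xs (Suc k)) = \<tau> * norm v" unfolding v_def using tau by simp
      also have "\<dots> \<le> real N * \<tau>" using N1 tau by (simp add: mult.commute mult_left_mono)
      finally have "u (xs k) - u (xs (Suc k)) \<le> real N * \<tau> * (A - c)" by (rule chain)
      then have "\<tau> * ?L (xs (Suc k)) v \<le> \<tau> * (real N * (A - c) + c)"
        using cal[of k] unfolding v_def by (simp add: algebra_simps)
      then have "?L (xs (Suc k)) v \<le> real N * (A - c) + c" using tau by simp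
      also have "\<dots> \<le> (norm v + 1) * (A - c) + c" using N2 cA by (intro add_right_mono mult_right_mono) auto
      finally have Lb: "?L (xs (Suc k)) v \<le> (norm v + 1) * (A - c) + c" .
      have "K * norm v - MK \<le> (norm v + 1) * (A - c) + c" using MK[where x="xs (Suc k)" and v=v] Lb by linarith
      then have "norm v * (K - (A - c)) \<le> A + MK" by (simp add: algebra_simps)
      moreover have "K - (A - c) \<ge> 1" using cM unfolding K_def by linarith
      moreover have "norm v * 1 \<le> norm v * (K - (A - c))"
        using calculation(2) by (intro mult_left_mono) auto
      ultimately have "norm v \<le> D" unfolding D_def by linarith
      then show "norm ((1 / \<tau>) *\<^sub>R (xs k - xs (Suc k))) \<le> D" unfolding v_def .
    qed
  qed
  moreover have "D > 0" unfolding D_def by simp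
  ultimately show ?thesis by blast
qed

end
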